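(* Consider equation (E) and assume each $\tau_i$ is non-decreasing. Let $p:[t_0,\infty)\to[0,\infty)$ be continuous with $p_i(t)\ge p(t)$ for all $t\ge t_0$ and $i=1,\dots,m$. If $$\limsup_{t\to+\infty}\prod_{j=1}^{m}\int_{\tau_j(t)}^{t}p(s)\,ds>\frac{1}{m^{m}},$$ then all solutions of (E) oscillate.
   Context: Equation (E) is $x'(t)+\sum_{i=1}^{m}p_i(t)\,x(\tau_i(t))=0$, $t\ge t_0$, where $m\ge1$ is an integer and, for each $i$, $p_i,\tau_i:[t_0,\infty)\to[0,\infty)$ are continuous, $\tau_i(t)\le t$ for $t\ge t_0$, and $\lim_{t\to\infty}\tau_i(t)=\infty$. Let $\tau(t)=\min_i\tau_i(t)$ and $\tau_{(-1)}(t)=\sup\{s:\tau(s)\le t\}$. A solution of (E) is a function $x\in C([T_0,\infty);\mathbb{R})$ for some $T_0\ge t_0$ which is continuously differentiable on $[\tau_{(-1)}(T_0),\infty)$ and satisfies (E) for $t\ge\tau_{(-1)}(T_0)$. A solution is oscillatory if it has arbitrarily large zeros; "all solutions oscillate" means every solution is oscillatory. *)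

theory Defs
  imports "HOL-Analysis.Analysis"
begin

text \<open>Equation (E): x'(t) + sum_{i=1..m} p_i(t) x(tau_i(t)) = 0, t >= t0.
  The coefficient functions and delays are indexed by i in {1..m}.\<close>

definition tau_min :: "nat \<Rightarrow> (nat \<Rightarrow> real \<Rightarrow> real) \<Rightarrow> real \<Rightarrow> real" where
  "tau_min m tau t = Min ((\<lambda>i. tau i t) ` {1..m})"

definition tau_inv :: "real \<Rightarrow> nat \<Rightarrow> (nat \<Rightarrow> real \<Rightarrow> real) \<Rightarrow> real \<Rightarrow> real" where
  "tau_inv t0 m tau T = Sup {s. t0 \<le> s \<and> tau_min m tau s \<le> T}"

definition is_solution ::
  "real \<Rightarrow> nat \<Rightarrow> (nat \<Rightarrow> real \<Rightarrow> real) \<Rightarrow> (nat \<Rightarrow> real \<Rightarrow> real) \<Rightarrow> (real \<Rightarrow> real) \<Rightarrow> real \<Rightarrow> bool" where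
  "is_solution t0 m p tau x T0 \<longleftrightarrow>
     T0 \<ge> t0 \<and> continuous_on {T0..} x \<and>
     (\<exists>x'. continuous_on {tau_inv t0 m tau T0..} x' \<and>
        (\<forall>t \<ge> tau_inv t0 m tau T0.
           (x has_real_derivative x' t) (at t within {tau_inv t0 m tau T0..}) \<and>
           x' t + (\<Sum>i=1..m. p i t * x (tau i t)) = 0))"

definition oscillatory :: "(real \<Rightarrow> real) \<Rightarrow> bool" where
  "oscillatory x \<longleftrightarrow> (\<forall>T. \<exists>t \<ge> T. x t = 0)"

end

theory Submission
  imports Defs
begin

lemma prod_bound:
  fixes a :: "nat \<Rightarrow> real" and m :: nat
  assumes m: "m \<ge> 1" and nn: "\<And>j. j \<in> {1..m} \<Longrightarrow> a j \<ge> 0"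
    and s: "(\<Sum>j=1..m. a j) < 1"
  shows "(\<Prod>j=1..m. a j) < 1 / real m ^ m"
proof -
  have "(\<Prod>j=1..m. real m * a j) \<le> (\<Prod>j=1..m. exp (real m * a j - 1))"
  proof (rule prod_mono)
    fix j assume "j \<in> {1..m}"
    then show "0 \<le> real m * a j \<and> real m * a j \<le> exp (real m * a j - 1)"
      using nn exp_ge_add_one_self[of "real m * a j - 1"] by auto
  qed
  also have "\<dots> = exp (\<Sum>j=1..m. (real m * a j - 1))" by (simp add: exp_sum)
  also have "(\<Sum>j=1..m. (real m * a j - 1)) = real m * (\<Sum>j=1..m. a j) - real m"
    by (simp add: sum_subtractf sum_distrib_left)
  also have "exp (real m * (\<Sum>j=1..m. a j) - real m) < 1"
  proof -
    have "real m * (\<Sum>j=1..m. a j) < real m * 1" using m s by (intro mult_strict_left_mono) auto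
    then show ?thesis by simp
  qed
  finally have "(\<Prod>j=1..m. real m * a j) < 1" .
  moreover have "(\<Prod>j=1..m. real m * a j) = real m ^ m * (\<Prod>j=1..m. a j)"
    by (simp add: prod.distrib)
  ultimately have "real m ^ m * (\<Prod>j=1..m. a j) < 1" by simp
  moreover have "real m ^ m > 0" using m by simp
  ultimately show ?thesis by (simp add: field_simps)
qed

lemma main_pos:
  fixes t0 :: real and m :: nat
    and p :: "nat \<Rightarrow> real \<Rightarrow> real" and tau :: "nat \<Rightarrow> real \<Rightarrow> real"
    and q :: "real \<Rightarrow> real"
  assumes m_pos: "m \<ge> 1"
    and p_nonneg: "\<And>i t. i \<in> {1..m} \<Longrightarrow> t \<ge> t0 \<Longrightarrow> p i t \<ge> 0"
    and tau_le: "\<And>i t. i \<in> {1..m} \<Longrightarrow> t \<ge> t0 \<Longrightarrow> tau i t \<le> t"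
    and tau_lim: "\<And>i. i \<in> {1..m} \<Longrightarrow> filterlim (tau i) at_top at_top"
    and tau_mono: "\<And>i. i \<in> {1..m} \<Longrightarrow> mono_on {t0..} (tau i)"
    and q_cont: "continuous_on {t0..} q"
    and q_nonneg: "\<And>t. t \<ge> t0 \<Longrightarrow> q t \<ge> 0"
    and q_le: "\<And>i t. i \<in> {1..m} \<Longrightarrow> t \<ge> t0 \<Longrightarrow> p i t \<ge> q t"
    and sol: "is_solution t0 m p tau x T0"
    and pos: "\<And>t. t \<ge> T \<Longrightarrow> x t > 0"
  shows "\<forall>\<^sub>F t in at_top. (\<Prod>j=1..m. integral {tau j t..t} q) < 1 / real m ^ m"
proof -
  define L where "L = tau_inv t0 m tau T0"
  obtain x' where dx: "\<And>t. t \<ge> L \<Longrightarrow> (x has_real_derivative x' t) (at t within {L..})"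
    and eq: "\<And>t. t \<ge> L \<Longrightarrow> x' t + (\<Sum>i=1..m. p i t * x (tau i t)) = 0"
    using sol unfolding is_solution_def L_def by blast
  have ftc: "(x' has_integral (x b - x a)) {a..b}" if "L \<le> a" "a \<le> b" for a b
  proof (rule fundamental_theorem_of_calculus[OF that(2)])
    fix s assume "s \<in> {a..b}"
    then have "(x has_real_derivative x' s) (at s within {a..b})"
      using dx[of s] that by (auto intro: DERIV_subset)
    then show "(x has_vector_derivative x' s) (at s within {a..b})"
      by (simp add: has_real_derivative_iff_has_vector_derivative)
  qed
  have ev: "\<exists>B\<ge>A. \<forall>t\<ge>B. \<forall>i\<in>{1..m}. tau i t \<ge> C" for A C
  proof -
    have "\<forall>\<^sub>F t in at_top. \<forall>i\<in>{1..m}. tau i t \<ge> C"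
      using tau_lim unfolding filterlim_at_top by (intro eventually_ball_finite) auto
    then obtain B where "\<forall>t\<ge>B. \<forall>i\<in>{1..m}. tau i t \<ge> C" by (auto simp: eventually_at_top_linorder)
    then show ?thesis by (intro exI[of _ "max A B"]) auto
  qed
  define T1 where "T1 = max T (max L t0)"
  obtain T2 where T2: "T2 \<ge> T1" "\<And>t i. t \<ge> T2 \<Longrightarrow> i \<in> {1..m} \<Longrightarrow> tau i t \<ge> T1"
    using ev by blast
  have dneg: "x' s \<le> 0" if "s \<ge> T2" for s
  proof -
    have "(\<Sum>i=1..m. p i s * x (tau i s)) \<ge> 0"
    proof (rule sum_nonneg)
      fix i assume i: "i \<in> {1..m}"
      then have "x (tau i s) > 0" using T2 that pos unfolding T1_def by force
      moreover have "p i s \<ge> 0" using p_nonneg i that T2 unfolding T1_def by auto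
      ultimately show "p i s * x (tau i s) \<ge> 0" by simp
    qed
    then show ?thesis using eq[of s] that T2 unfolding T1_def by auto
  qed
  have noninc: "x b \<le> x a" if "T2 \<le> a" "a \<le> b" for a b
  proof -
    have "L \<le> a" using that T2 unfolding T1_def by auto
    from has_integral_neg[OF ftc[OF this that(2)]]
    have "((\<lambda>s. - x' s) has_integral - (x b - x a)) {a..b}" .
    then have "0 \<le> - (x b - x a)"
      by (rule has_integral_nonneg) (use dneg that in auto)
    then show ?thesis by simp
  qed
  obtain T3 where T3: "T3 \<ge> T2" "\<And>t i. t \<ge> T3 \<Longrightarrow> i \<in> {1..m} \<Longrightarrow> tau i t \<ge> T2"
    using ev by blast
  obtain T4 where T4: "T4 \<ge> T3" "\<And>t i. t \<ge> T4 \<Longrightarrow> i \<in> {1..m} \<Longrightarrow> tau i t \<ge> T3"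
    using ev by blast
  have "\<forall>t\<ge>T4. (\<Prod>j=1..m. integral {tau j t..t} q) < 1 / real m ^ m"
  proof (intro allI impI)
    fix t assume t: "t \<ge> T4"
    have tt0: "t \<ge> t0" using t T4 T3 T2 unfolding T1_def by auto
    define S where "S = (\<Sum>i=1..m. x (tau i t))"
    have xpos: "x (tau i t) > 0" if "i \<in> {1..m}" for i
      using T4 T3 T2 t that pos unfolding T1_def by force
    have Spos: "S > 0" unfolding S_def using m_pos xpos by (intro sum_pos) auto
    have aj: "integral {tau j t..t} q \<ge> 0 \<and> integral {tau j t..t} q * S < x (tau j t)"
      if j: "j \<in> {1..m}" for j
    proof -
      define a where "a = tau j t"
      have aT3: "a \<ge> T3" using T4 t j unfolding a_def by auto
      have at: "a \<le> t" using tau_le j tt0 unfolding a_def by auto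
      have a0: "a \<ge> t0" using aT3 T3 T2 unfolding T1_def by auto
      have qint: "q integrable_on {a..t}"
        by (rule integrable_continuous_interval, rule continuous_on_subset[OF q_cont]) (use a0 in auto)
      have nn: "integral {a..t} q \<ge> 0"
        by (rule integral_nonneg[OF qint]) (use a0 q_nonneg in auto)
      have LA: "L \<le> a" using aT3 T3 T2 unfolding T1_def by auto
      have I1: "((\<lambda>s. q s * S) has_integral (integral {a..t} q * S)) {a..t}"
        by (rule has_integral_mult_left) (rule integrable_integral[OF qint])
      have I2: "((\<lambda>s. - x' s) has_integral - (x t - x a)) {a..t}"
        by (rule has_integral_neg[OF ftc[OF LA at]])
      have "integral {a..t} q * S \<le> - (x t - x a)"
      proof (rule has_integral_le[OF I1 I2])
        fix s assume s: "s \<in> {a..t}"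
        have sT3: "s \<ge> T3" using s aT3 by auto
        have s0: "s \<ge> t0" using sT3 T3 T2 unfolding T1_def by auto
        have "q s * S = (\<Sum>i=1..m. q s * x (tau i t))" unfolding S_def by (simp add: sum_distrib_left)
        also have "\<dots> \<le> (\<Sum>i=1..m. p i s * x (tau i s))"
        proof (rule sum_mono)
          fix i assume i: "i \<in> {1..m}"
          have "tau i s \<le> tau i t" using mono_onD[OF tau_mono[OF i]] s s0 tt0 by auto
          moreover have "tau i s \<ge> T2" using T3 sT3 i by auto
          ultimately have "x (tau i t) \<le> x (tau i s)" by (rule noninc[rotated])
          then show "q s * x (tau i t) \<le> p i s * x (tau i s)"
            using q_le[OF i s0] q_nonneg[OF s0] xpos[OF i]
            by (intro mult_mono) auto
        qed
        also have "\<dots> = - x' s" using eq[of s] LA s by auto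
        finally show "q s * S \<le> - x' s" .
      qed
      moreover have "x t > 0" using pos t T4 T3 T2 unfolding T1_def by auto
      ultimately show ?thesis using nn unfolding a_def by auto
    qed
    have "(\<Sum>j=1..m. integral {tau j t..t} q * S) < (\<Sum>j=1..m. x (tau j t))"
      using m_pos aj by (intro sum_strict_mono) auto
    then have "(\<Sum>j=1..m. integral {tau j t..t} q) * S < 1 * S"
      unfolding S_def by (simp add: sum_distrib_right)
    then have "(\<Sum>j=1..m. integral {tau j t..t} q) < 1"
      using Spos by (meson mult_less_cancel_right_pos)
    then show "(\<Prod>j=1..m. integral {tau j t..t} q) < 1 / real m ^ m"
      using prod_bound[OF m_pos, of "\<lambda>j. integral {tau j t..t} q"] aj by simp
  qed
  then show ?thesis by (auto simp: eventually_at_top_linorder)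
qed

lemma neg_solution:
  assumes "is_solution t0 m p tau x T0"
  shows "is_solution t0 m p tau (\<lambda>t. - x t) T0"
proof -
  from assms obtain x' where h: "T0 \<ge> t0" "continuous_on {T0..} x"
    "continuous_on {tau_inv t0 m tau T0..} x'"
    "\<And>t. t \<ge> tau_inv t0 m tau T0 \<Longrightarrow>
       (x has_real_derivative x' t) (at t within {tau_inv t0 m tau T0..}) \<and>
       x' t + (\<Sum>i=1..m. p i t * x (tau i t)) = 0"
    unfolding is_solution_def by blast
  show ?thesis unfolding is_solution_def
  proof (intro conjI exI[of _ "\<lambda>t. - x' t"] allI impI)
    show "T0 \<ge> t0" by fact
    show "continuous_on {T0..} (\<lambda>t. - x t)" using h(2) by (intro continuous_intros)
    show "continuous_on {tau_inv t0 m tau T0..} (\<lambda>t. - x' t)" using h(3) by (intro continuous_intros)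
    fix t assume t: "t \<ge> tau_inv t0 m tau T0"
    show "((\<lambda>t. - x t) has_real_derivative - x' t) (at t within {tau_inv t0 m tau T0..})"
      using h(4)[OF t] by (intro DERIV_minus) auto
    have "- x' t + (\<Sum>i=1..m. p i t * - x (tau i t)) = - (x' t + (\<Sum>i=1..m. p i t * x (tau i t)))"
      by (simp add: sum_negf)
    then show "- x' t + (\<Sum>i=1..m. p i t * - x (tau i t)) = 0" using h(4)[OF t] by simp
  qed
qed

theorem corollary3p4:
  fixes t0 :: real and m :: nat
    and p :: "nat \<Rightarrow> real \<Rightarrow> real" and tau :: "nat \<Rightarrow> real \<Rightarrow> real"
    and q :: "real \<Rightarrow> real"
  assumes m_pos: "m \<ge> 1"
    and p_cont: "\<And>i. i \<in> {1..m} \<Longrightarrow> continuous_on {t0..} (p i)"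
    and p_nonneg: "\<And>i t. i \<in> {1..m} \<Longrightarrow> t \<ge> t0 \<Longrightarrow> p i t \<ge> 0"
    and tau_cont: "\<And>i. i \<in> {1..m} \<Longrightarrow> continuous_on {t0..} (tau i)"
    and tau_nonneg: "\<And>i t. i \<in> {1..m} \<Longrightarrow> t \<ge> t0 \<Longrightarrow> tau i t \<ge> 0"
    and tau_le: "\<And>i t. i \<in> {1..m} \<Longrightarrow> t \<ge> t0 \<Longrightarrow> tau i t \<le> t"
    and tau_lim: "\<And>i. i \<in> {1..m} \<Longrightarrow> filterlim (tau i) at_top at_top"
    and tau_mono: "\<And>i. i \<in> {1..m} \<Longrightarrow> mono_on {t0..} (tau i)"
    and q_cont: "continuous_on {t0..} q"
    and q_nonneg: "\<And>t. t \<ge> t0 \<Longrightarrow> q t \<ge> 0"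
    and q_le: "\<And>i t. i \<in> {1..m} \<Longrightarrow> t \<ge> t0 \<Longrightarrow> p i t \<ge> q t"
    and cond: "Limsup at_top (\<lambda>t. ereal (\<Prod>j=1..m. integral {tau j t..t} q))
                 > ereal (1 / real m ^ m)"
  shows "\<forall>x T0. is_solution t0 m p tau x T0 \<longrightarrow> oscillatory x"
proof (intro allI impI)
  fix x T0 assume sol: "is_solution t0 m p tau x T0"
  show "oscillatory x"
  proof (rule ccontr)
    assume "\<not> oscillatory x"
    then obtain T where nz: "\<And>t. t \<ge> T \<Longrightarrow> x t \<noteq> 0" unfolding oscillatory_def by auto
    define T1 where "T1 = max T T0"
    have xc: "continuous_on {T1..} x"
      using sol unfolding is_solution_def T1_def by (auto intro: continuous_on_subset)
    have sign: "(\<forall>t\<ge>T1. x t > 0) \<or> (\<forall>t\<ge>T1. x t < 0)"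
    proof (rule ccontr)
      assume "\<not> ?thesis"
      then obtain a b where ab: "a \<ge> T1" "b \<ge> T1" "x a \<le> 0" "x b \<ge> 0" by force
      have "\<exists>s\<ge>T1. x s = 0"
      proof (cases "a \<le> b")
        case True
        have "continuous_on {a..b} x" using xc ab by (auto intro: continuous_on_subset)
        then obtain s where "a \<le> s" "s \<le> b" "x s = 0" using IVT'[of x a 0 b] ab True by auto
        then show ?thesis using ab by (meson order_trans)
      next
        case False
        have "continuous_on {b..a} x" using xc ab by (auto intro: continuous_on_subset)
        then obtain s where "b \<le> s" "s \<le> a" "x s = 0" using IVT2'[of x a 0 b] ab False by auto
        then show ?thesis using ab by (meson order_trans)
      qed
      then show False using nz unfolding T1_def by auto
    qed
    have evl: "\<forall>\<^sub>F t in at_top. (\<Prod>j=1..m. integral {tau j t..t} q) < 1 / real m ^ m"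
    proof (cases "\<forall>t\<ge>T1. x t > 0")
      case True
      show ?thesis
        by (rule main_pos[OF m_pos p_nonneg tau_le tau_lim tau_mono q_cont q_nonneg q_le sol, of T1])
           (use True in auto)
    next
      case False
      then have "\<forall>t\<ge>T1. x t < 0" using sign by auto
      then show ?thesis
        by (intro main_pos[OF m_pos p_nonneg tau_le tau_lim tau_mono q_cont q_nonneg q_le
              neg_solution[OF sol], of T1]) auto
    qed
    have "Limsup at_top (\<lambda>t. ereal (\<Prod>j=1..m. integral {tau j t..t} q)) \<le> ereal (1 / real m ^ m)"
      by (rule Limsup_bounded) (use evl in \<open>auto elim: eventually_mono\<close>)
    then show False using cond by simp
  qed
qed

end
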